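(* Let $\mathcal{D}=\{x_1,\ldots,x_M\}\subset\mathbb{R}^3$ be a finite point cloud of $M$ pairwise distinct points. Then for every $\epsilon$ with $$0<\epsilon<\tfrac{1}{2}\min_{1\le i<j\le M}\|x_i-x_j\|_2,$$ there exists $\delta>0$ such that for every point cloud $\mathcal{D}'=\{x_1',\ldots,x_M'\}\subset\mathbb{R}^3$ with $\max_{1\le i\le M}\|x_i-x_i'\|_2\le\delta$, one has $$\big\|\chi(\mathcal{K}(r))-\chi(\mathcal{K}'(r))\big\|_1\le \tfrac{1}{4}M^4\epsilon,$$ where $\{\mathcal{K}(r)\}_{r\ge0}$ and $\{\mathcal{K}'(r)\}_{r\ge0}$ are the Alpha filtrations of $\mathcal{D}$ and $\mathcal{D}'$ respectively.
   Context: For a finite set $P=\{x_1,\dots,x_n\}\subset\mathbb{R}^d$, the Voronoi cell of $x_i$ is $V(x_i)=\{x\in\mathbb{R}^d:\|x-x_i\|\le\|x-x_j\|\ \forall j\}$, and $B(x_i,r)$ is the closed Euclidean ball of radius $r$ about $x_i$. The nerve of a family of sets $\{U_i\}_{i\in\Lambda}$ is the simplicial complex on vertex set $\Lambda$ in which $\{i_0,\dots,i_k\}$ spans a $k$-simplex iff $U_{i_0}\cap\cdots\cap U_{i_k}\neq\emptyset$. The Alpha complex of $P$ at scale $r\ge 0$ is the nerve of $\{V(x_i)\cap B(x_i,r)\}_{i}$; as $r$ increases these complexes are nested and form the Alpha filtration $\{\mathcal{K}(r)\}_{r\ge0}$. For a finite simplicial complex $\mathcal{K}$, $\chi(\mathcal{K})=\sum_{i\ge0}(-1)^iC_i(\mathcal{K})$,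 where $C_i(\mathcal{K})$ is the number of $i$-simplices. The Euler characteristic curve is the function $r\mapsto\chi(\mathcal{K}(r))$ on $[0,\infty)$, and $\|\chi(\mathcal{K}(r))-\chi(\mathcal{K}'(r))\|_1=\int_0^\infty|\chi(\mathcal{K}(r))-\chi(\mathcal{K}'(r))|\,dr$ (the $L^1$ norm in the scale variable $r$). *)

theory Defs
  imports "HOL-Analysis.Analysis"
begin

text \<open>A point cloud of M points is an indexed family P :: nat => real^3 on indices {..<M}.\<close>

definition voronoi_cell :: "(nat \<Rightarrow> real^3) \<Rightarrow> nat \<Rightarrow> nat \<Rightarrow> (real^3) set" where
  "voronoi_cell P M i = {x. \<forall>j<M. dist x (P i) \<le> dist x (P j)}"

definition nerve :: "'i set \<Rightarrow> ('i \<Rightarrow> 'a set) \<Rightarrow> 'i set set" where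
  "nerve Lambda U = {s. s \<subseteq> Lambda \<and> s \<noteq> {} \<and> finite s \<and> (\<Inter>i\<in>s. U i) \<noteq> {}}"

definition alpha_complex :: "(nat \<Rightarrow> real^3) \<Rightarrow> nat \<Rightarrow> real \<Rightarrow> nat set set" where
  "alpha_complex P M r = nerve {..<M} (\<lambda>i. voronoi_cell P M i \<inter> cball (P i) r)"

definition num_simplices :: "'i set set \<Rightarrow> nat \<Rightarrow> nat" where
  "num_simplices K i = card {s\<in>K. card s = Suc i}"

text \<open>Euler characteristic of a finite simplicial complex whose simplices have at most n vertices.\<close>
definition euler_char :: "'i set set \<Rightarrow> nat \<Rightarrow> int" where
  "euler_char K n = (\<Sum>i<n. (-1)^i * int (num_simplices K i))"

text \<open>Euler characteristic curve of the Alpha filtration of an M-point cloud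
  (simplices have at most M vertices, so summing over dimensions < M covers all).\<close>
definition ecc :: "(nat \<Rightarrow> real^3) \<Rightarrow> nat \<Rightarrow> real \<Rightarrow> int" where
  "ecc P M r = euler_char (alpha_complex P M r) M"

end

theory Submission
  imports Defs
begin

definition chi :: "'i set \<Rightarrow> ('i \<Rightarrow> 'a set) \<Rightarrow> int" where
  "chi I U = (\<Sum>s\<in>Pow I. if s \<noteq> {} \<and> \<Inter>(U ` s) \<noteq> {} then (-1)^(card s - 1) else 0)"

lemma alt_pow_zero:
  assumes "finite T" "T \<noteq> {}"
  shows "(\<Sum>s\<in>Pow T. (-1::int)^card s) = 0"
proof -
  have "(\<Prod>x\<in>T. (1::int) - 1) = (\<Sum>X\<in>Pow T. (-1) ^ card X * (\<Prod>x\<in>X. 1) * (\<Prod>x\<in>T-X. 1))"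
    by (rule prod_diff_conv_sum[OF assms(1)])
  moreover have "(0::int)^card T = 0" using assms by (simp add: card_gt_0_iff zero_power)
  ultimately show ?thesis by simp
qed

lemma alt_pow_one:
  assumes "finite T" "T \<noteq> {}"
  shows "(\<Sum>s\<in>Pow T. if s \<noteq> {} then (-1::int)^(card s - 1) else 0) = 1"
proof -
  have "\<forall>s\<in>Pow T. (if s \<noteq> {} then (-1::int)^(card s - 1) else 0) = (if s = {} then 1 else 0) - (-1)^card s"
  proof
    fix s assume "s \<in> Pow T"
    then have fs: "finite s" using assms(1) finite_subset by blast
    show "(if s \<noteq> {} then (-1::int)^(card s - 1) else 0) = (if s = {} then 1 else 0) - (-1)^card s"
    proof (cases "s = {}")
      case False
      then have "card s = Suc (card s - 1)" using fs by (simp add: card_gt_0_iff)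
      then have "(-1::int)^card s = - ((-1)^(card s - 1))" by (metis power_Suc mult_minus1)
      then show ?thesis using False by simp
    qed simp
  qed
  then have "(\<Sum>s\<in>Pow T. if s \<noteq> {} then (-1::int)^(card s - 1) else 0)
      = (\<Sum>s\<in>Pow T. (if s = {} then 1 else 0)) - (\<Sum>s\<in>Pow T. (-1)^card s)"
    by (simp add: sum_subtractf)
  also have "\<dots> = 1" using alt_pow_zero[OF assms] assms(1)
    by (simp add: sum.delta')
  finally show ?thesis .
qed

lemma closest_point_charI:
  fixes C :: "'a::euclidean_space set"
  assumes "convex C" "closed C" "y \<in> C" "\<forall>c\<in>C. inner (z - y) (c - y) \<le> 0"
  shows "closest_point C z = y"
proof -
  have "\<forall>c\<in>C. dist z y \<le> dist z c"
  proof
    fix c assume c: "c \<in> C"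
    have "(dist z c)^2 = (norm ((z - y) - (c - y)))^2" by (simp add: dist_norm)
    also have "\<dots> = (norm (z-y))^2 - 2 * inner (z - y) (c - y) + (norm (c-y))^2"
      using dot_norm_neg[of "z-y" "c-y"] by simp
    also have "\<dots> \<ge> (norm (z-y))^2"
    proof -
      have "inner (z - y) (c - y) \<le> 0" using assms(4) c by blast
      then show ?thesis using zero_le_power2[of "norm (c-y)"] by linarith
    qed
    finally have "(dist z y)^2 \<le> (dist z c)^2" by (simp add: dist_norm)
    then show "dist z y \<le> dist z c" by (meson power2_le_imp_le zero_le_dist)
  qed
  from closest_point_unique[OF assms(1-3) this] show ?thesis by simp
qed

lemma nerve_chi:
  fixes U :: "'i \<Rightarrow> 'a::euclidean_space set"
  assumes "finite I" "\<forall>i\<in>I. closed (U i) \<and> convex (U i)" "convex (\<Union>(U ` I))" "\<Union>(U ` I) \<noteq> {}"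
  shows "chi I U = 1"
  using assms
proof (induction "card I" arbitrary: I U rule: less_induct)
  case less
  note finI = less.prems(1) and cc = less.prems(2) and cvx = less.prems(3) and ne = less.prems(4)
  define sg :: "'i set \<Rightarrow> int" where "sg s = (-1)^(card s - 1)" for s
  have Ine: "I \<noteq> {}" using ne by auto
  have Cclosed: "closed (\<Inter>(U ` s))" if "s \<subseteq> I" for s
    using cc that by (intro closed_INT) auto
  have Cconvex: "convex (\<Inter>(U ` s))" if "s \<subseteq> I" for s
    using cc that by (intro convex_INT) auto
  show ?case
  proof (cases "\<Inter>(U ` I) = {}")
    case False
    have "chi I U = (\<Sum>s\<in>Pow I. if s \<noteq> {} then (-1::int)^(card s - 1) else 0)"
      unfolding chi_def
    proof (rule sum.cong)
      fix s assume "s \<in> Pow I"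
      then have "\<Inter>(U ` I) \<subseteq> \<Inter>(U ` s)" by auto
      then show "(if s \<noteq> {} \<and> \<Inter>(U ` s) \<noteq> {} then (-1::int)^(card s - 1) else 0) =
          (if s \<noteq> {} then (-1::int)^(card s - 1) else 0)" using False by auto
    qed simp
    also have "\<dots> = 1" using alt_pow_one[OF finI Ine] .
    finally show ?thesis .
  next
    case allempty: True
    obtain z where z: "z \<in> \<Union>(U ` I)" using ne by auto
    define N where "N = {s\<in>Pow I. s \<noteq> {} \<and> \<Inter>(U ` s) \<noteq> {}}"
    define p where "p s = closest_point (\<Inter>(U ` s)) z" for s
    have finN: "finite N" unfolding N_def using finI by simp
    have pin: "p s \<in> \<Inter>(U ` s)" if "s \<in> N" for s
      using that unfolding N_def p_def using Cclosed closest_point_in_set by blast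
    have "sum sg N = (\<Sum>s\<in>Pow I. if s \<noteq> {} \<and> \<Inter>(U ` s) \<noteq> {} then sg s else 0)"
      unfolding N_def by (rule sum.inter_filter) (simp add: finI)
    moreover have "chi I U = (\<Sum>s\<in>Pow I. if s \<noteq> {} \<and> \<Inter>(U ` s) \<noteq> {} then sg s else 0)"
      unfolding chi_def sg_def by (rule refl)
    ultimately have chiN: "chi I U = sum sg N" by simp
    also have "\<dots> = (\<Sum>y\<in>p ` N. sum sg {s. s \<in> N \<and> p s = y})"
      by (rule sum.image_gen[OF finN])
    also have "\<dots> = (\<Sum>y\<in>p ` N. if y = z then 1 else 0)"
    proof (rule sum.cong[OF refl])
      fix y assume "y \<in> p ` N"
      then obtain s0 where s0: "s0 \<in> N" "y = p s0" by auto
      define T where "T = {i\<in>I. y \<in> U i}"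
      have TI: "T \<subseteq> I" unfolding T_def by auto
      have finT: "finite T" using finI TI finite_subset by blast
      have s0T: "s0 \<subseteq> T" using pin[OF s0(1)] s0 N_def T_def by auto
      have Tne: "T \<noteq> {}" using s0T s0(1) N_def by auto
      have E: "(s \<in> N \<and> p s = y) \<longleftrightarrow> (s \<subseteq> T \<and> s \<noteq> {} \<and> (\<forall>c\<in>\<Inter>(U ` s). inner (z - y) (c - y) \<le> 0))"
        for s
      proof
        assume a: "s \<in> N \<and> p s = y"
        then have sI: "s \<subseteq> I" "s \<noteq> {}" unfolding N_def by auto
        have "y \<in> \<Inter>(U ` s)" using pin a by auto
        then have "s \<subseteq> T" using sI unfolding T_def by auto
        moreover have "\<forall>c\<in>\<Inter>(U ` s). inner (z - y) (c - y) \<le> 0"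
          using closest_point_dot[OF Cconvex[OF sI(1)] Cclosed[OF sI(1)]] a unfolding p_def by blast
        ultimately show "s \<subseteq> T \<and> s \<noteq> {} \<and> (\<forall>c\<in>\<Inter>(U ` s). inner (z - y) (c - y) \<le> 0)"
          using sI by blast
      next
        assume a: "s \<subseteq> T \<and> s \<noteq> {} \<and> (\<forall>c\<in>\<Inter>(U ` s). inner (z - y) (c - y) \<le> 0)"
        then have sI: "s \<subseteq> I" using TI by auto
        have yC: "y \<in> \<Inter>(U ` s)" using a unfolding T_def by auto
        then have "s \<in> N" using a sI unfolding N_def by auto
        moreover have "p s = y" unfolding p_def
          using closest_point_charI[OF Cconvex[OF sI] Cclosed[OF sI] yC] a by blast
        ultimately show "s \<in> N \<and> p s = y" by blast
      qed
      have sumE: "sum sg {s. s \<in> N \<and> p s = y} =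
          (\<Sum>s\<in>Pow T. if s \<noteq> {} \<and> (\<forall>c\<in>\<Inter>(U ` s). inner (z - y) (c - y) \<le> 0) then sg s else 0)"
      proof -
        have eqS: "{s. s \<in> N \<and> p s = y} = {s \<in> Pow T. s \<noteq> {} \<and> (\<forall>c\<in>\<Inter>(U ` s). inner (z - y) (c - y) \<le> 0)}"
          using E by auto
        show ?thesis unfolding eqS by (rule sum.inter_filter) (simp add: finT)
      qed
      show "sum sg {s. s \<in> N \<and> p s = y} = (if y = z then 1 else 0)"
      proof (cases "y = z")
        case True
        have "sum sg {s. s \<in> N \<and> p s = y} = (\<Sum>s\<in>Pow T. if s \<noteq> {} then (-1::int)^(card s - 1) else 0)"
          unfolding sumE sg_def using True by simp
        also have "\<dots> = 1" using alt_pow_one[OF finT Tne] .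
        finally show ?thesis using True by simp
      next
        case False
        have "T \<noteq> I"
        proof
          assume "T = I"
          then have "y \<in> \<Inter>(U ` I)" unfolding T_def by auto
          then show False using allempty by auto
        qed
        then have cardT: "card T < card I" using TI finI by (simp add: psubset_card_mono)
        define F where "F = \<Union>(U ` (I - T))"
        have "closed F" unfolding F_def using cc finI by (intro closed_Union) auto
        moreover have "y \<notin> F" unfolding F_def T_def by auto
        ultimately obtain \<rho> where rho: "\<rho> > 0" "cball y \<rho> \<subseteq> - F"
          using open_contains_cball[of "- F"] by (auto simp: open_Compl)
        define a where "a = z - y"
        have a0: "a \<noteq> 0" using False unfolding a_def by auto
        define W where "W = {s\<in>Pow T. s \<noteq> {} \<and> \<not> (\<forall>c\<in>\<Inter>(U ` s). inner a (c - y) \<le> 0)}"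
        have finW: "finite W" unfolding W_def using finT by simp
        have "\<forall>s\<in>W. \<exists>c. c \<in> \<Inter>(U ` s) \<and> c \<in> cball y \<rho> \<and> 0 < inner a (c - y)"
        proof
          fix s assume sW: "s \<in> W"
          then obtain c where c: "c \<in> \<Inter>(U ` s)" "inner a (c - y) > 0" unfolding W_def by (auto simp: not_le)
          have sI: "s \<subseteq> I" "s \<noteq> {}" using sW TI unfolding W_def by auto
          have yC: "y \<in> \<Inter>(U ` s)" using sW unfolding W_def T_def by auto
          have cy: "c \<noteq> y" using c(2) by auto
          define lam where "lam = min 1 (\<rho> / norm (c - y))"
          have lam: "0 < lam" "lam \<le> 1" "lam * norm (c - y) \<le> \<rho>"
            unfolding lam_def using rho(1) cy by (auto simp: min_def field_simps)
          define c' where "c' = (1 - lam) *\<^sub>R y + lam *\<^sub>R c"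
          have "c' \<in> \<Inter>(U ` s)" unfolding c'_def
            using convexD_alt[OF Cconvex[OF sI(1)] yC c(1)] lam by auto
          moreover have "c' - y = lam *\<^sub>R (c - y)" unfolding c'_def by (simp add: algebra_simps)
          moreover have "c' \<in> cball y \<rho>" using lam
            by (simp add: dist_norm c'_def algebra_simps norm_minus_commute flip: scaleR_diff_right)
          ultimately show "\<exists>c. c \<in> \<Inter>(U ` s) \<and> c \<in> cball y \<rho> \<and> 0 < inner a (c - y)"
            using c(2) lam(1) by (intro exI[of _ c']) auto
        qed
        then obtain cw where cw: "\<forall>s\<in>W. cw s \<in> \<Inter>(U ` s) \<and> cw s \<in> cball y \<rho> \<and> 0 < inner a (cw s - y)"
          by metis
        define mu where "mu = min 1 (\<rho> / norm a)"
        have mu: "0 < mu" "mu \<le> 1" "mu * norm a \<le> \<rho>"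
          unfolding mu_def using rho(1) a0 by (auto simp: min_def field_simps)
        define q where "q = (1 - mu) *\<^sub>R y + mu *\<^sub>R z"
        have qy: "q - y = mu *\<^sub>R a" unfolding q_def a_def by (simp add: algebra_simps)
        have q_ball: "q \<in> cball y \<rho>" using mu qy
          by (simp add: dist_norm norm_minus_commute)
        have yU: "y \<in> \<Union>(U ` I)" using s0T Tne TI unfolding T_def by auto
        have qU: "q \<in> \<Union>(U ` I)" unfolding q_def
          using convexD_alt[OF cvx yU z] mu by auto
        have gam: "0 < inner a (q - y)" using qy mu a0 by simp
        define t where "t = Min (insert (inner a (q - y)) ((\<lambda>s. inner a (cw s - y)) ` W))"
        have t_pos: "0 < t" unfolding t_def using finW gam cw by (subst Min_gr_iff) auto
        have t_le_q: "t \<le> inner a (q - y)" unfolding t_def using finW by simp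
        have t_le_w: "t \<le> inner a (cw s - y)" if "s \<in> W" for s
          unfolding t_def using finW that by simp
        define H where "H = {c. t \<le> inner a (c - y)}"
        define D where "D i = U i \<inter> cball y \<rho> \<inter> H" for i
        have H_eq: "H = {c. inner a c \<ge> t + inner a y}" unfolding H_def by (auto simp: inner_diff_right)
        have closedH: "closed H" unfolding H_eq by (rule closed_halfspace_ge)
        have convexH: "convex H" unfolding H_eq by (rule convex_halfspace_ge)
        have DU: "\<Union>(D ` T) = \<Union>(U ` I) \<inter> cball y \<rho> \<inter> H"
        proof
          show "\<Union>(D ` T) \<subseteq> \<Union>(U ` I) \<inter> cball y \<rho> \<inter> H" unfolding D_def using TI by auto
        next
          show "\<Union>(U ` I) \<inter> cball y \<rho> \<inter> H \<subseteq> \<Union>(D ` T)"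
          proof
            fix c assume "c \<in> \<Union>(U ` I) \<inter> cball y \<rho> \<inter> H"
            then obtain i where i: "i \<in> I" "c \<in> U i" "c \<in> cball y \<rho>" "c \<in> H" by auto
            have "i \<in> T"
            proof (rule ccontr)
              assume "i \<notin> T"
              then have "c \<in> F" unfolding F_def using i by auto
              then show False using rho(2) i(3) by auto
            qed
            then show "c \<in> \<Union>(D ` T)" unfolding D_def using i by auto
          qed
        qed
        have IH: "chi T D = 1"
        proof (rule less.hyps[OF cardT finT])
          show "\<forall>i\<in>T. closed (D i) \<and> convex (D i)"
            unfolding D_def using cc TI closedH convexH by (auto intro!: closed_Int convex_Int)
          show "convex (\<Union>(D ` T))" unfolding DU using cvx convexH by (intro convex_Int) auto
          show "\<Union>(D ` T) \<noteq> {}" unfolding DU using qU q_ball t_le_q unfolding H_def by auto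
        qed
        have key: "(if s \<noteq> {} \<and> (\<forall>c\<in>\<Inter>(U ` s). inner (z - y) (c - y) \<le> 0) then sg s else 0)
            = (if s \<noteq> {} then sg s else 0) - (if s \<noteq> {} \<and> \<Inter>(D ` s) \<noteq> {} then sg s else 0)"
          if sT: "s \<in> Pow T" for s
        proof (cases "s = {}")
          case sne: False
          have DI: "\<Inter>(D ` s) = \<Inter>(U ` s) \<inter> cball y \<rho> \<inter> H" unfolding D_def using sne by auto
          have "(\<forall>c\<in>\<Inter>(U ` s). inner a (c - y) \<le> 0) \<longleftrightarrow> \<Inter>(D ` s) = {}"
          proof
            assume A: "\<forall>c\<in>\<Inter>(U ` s). inner a (c - y) \<le> 0"
            show "\<Inter>(D ` s) = {}"
            proof (rule ccontr)
              assume "\<Inter>(D ` s) \<noteq> {}"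
              then obtain c where "c \<in> \<Inter>(U ` s)" "c \<in> H" unfolding DI by auto
              then show False using A t_pos unfolding H_def by force
            qed
          next
            assume B: "\<Inter>(D ` s) = {}"
            show "\<forall>c\<in>\<Inter>(U ` s). inner a (c - y) \<le> 0"
            proof (rule ccontr)
              assume "\<not> (\<forall>c\<in>\<Inter>(U ` s). inner a (c - y) \<le> 0)"
              then have sW: "s \<in> W" unfolding W_def using sT sne by auto
              then have "cw s \<in> \<Inter>(D ` s)" unfolding DI H_def using cw t_le_w by auto
              then show False using B by auto
            qed
          qed
          then show ?thesis using sne unfolding a_def by auto
        qed simp
        have "sum sg {s. s \<in> N \<and> p s = y} =
            (\<Sum>s\<in>Pow T. if s \<noteq> {} then sg s else 0) - (\<Sum>s\<in>Pow T. if s \<noteq> {} \<and> \<Inter>(D ` s) \<noteq> {} then sg s else 0)"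
          unfolding sumE by (simp add: key sum_subtractf)
        also have "\<dots> = 1 - chi T D" unfolding sg_def chi_def using alt_pow_one[OF finT Tne] by simp
        also have "\<dots> = 0" using IH by simp
        finally show ?thesis using False by simp
      qed
    qed
    also have "\<dots> = 1"
    proof -
      obtain i0 where i0: "i0 \<in> I" "z \<in> U i0" using z by auto
      have "{i0} \<in> N" unfolding N_def using i0 by auto
      moreover have "p {i0} = z" unfolding p_def using i0 by (simp add: closest_point_self)
      ultimately have "z \<in> p ` N" by force
      then show ?thesis using finN by simp
    qed
    finally show ?thesis .
  qed
qed

lemma chi_double:
  fixes A :: "'i \<Rightarrow> 'a::euclidean_space set" and B :: "'j \<Rightarrow> 'a set"
  assumes finI: "finite I" and finJ: "finite J"
    and cA: "\<forall>i\<in>I. closed (A i) \<and> convex (A i)" and cB: "\<forall>j\<in>J. closed (B j) \<and> convex (B j)"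
    and sub: "\<Union>(A ` I) \<subseteq> \<Union>(B ` J)"
  shows "chi I A = (\<Sum>s\<in>Pow I. \<Sum>t\<in>Pow J. if s \<noteq> {} \<and> t \<noteq> {} \<and> \<Inter>(A ` s) \<inter> \<Inter>(B ` t) \<noteq> {}
            then (-1::int)^(card s - 1) * (-1)^(card t - 1) else 0)"
  unfolding chi_def
proof (rule sum.cong[OF refl])
  fix s assume sI: "s \<in> Pow I"
  show "(if s \<noteq> {} \<and> \<Inter>(A ` s) \<noteq> {} then (-1::int)^(card s - 1) else 0) =
    (\<Sum>t\<in>Pow J. if s \<noteq> {} \<and> t \<noteq> {} \<and> \<Inter>(A ` s) \<inter> \<Inter>(B ` t) \<noteq> {}
            then (-1::int)^(card s - 1) * (-1)^(card t - 1) else 0)"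
  proof (cases "s \<noteq> {} \<and> \<Inter>(A ` s) \<noteq> {}")
    case False
    then show ?thesis by auto
  next
    case True
    define As where "As = \<Inter>(A ` s)"
    have clAs: "closed As" "convex As" unfolding As_def using cA sI
      by (auto intro!: closed_INT convex_INT)
    have AsU: "As \<subseteq> \<Union>(B ` J)" using True sub sI unfolding As_def by blast
    have "chi J (\<lambda>j. As \<inter> B j) = 1"
    proof (rule nerve_chi[OF finJ])
      show "\<forall>j\<in>J. closed (As \<inter> B j) \<and> convex (As \<inter> B j)" using clAs cB
        by (auto intro!: closed_Int convex_Int)
      have "\<Union>((\<lambda>j. As \<inter> B j) ` J) = As" using AsU by blast
      then show "convex (\<Union>((\<lambda>j. As \<inter> B j) ` J))" "\<Union>((\<lambda>j. As \<inter> B j) ` J) \<noteq> {}"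
        using clAs True unfolding As_def by auto
    qed
    moreover have "(\<Sum>t\<in>Pow J. if t \<noteq> {} \<and> As \<inter> \<Inter>(B ` t) \<noteq> {} then (-1::int)^(card t - 1) else 0)
        = chi J (\<lambda>j. As \<inter> B j)"
      unfolding chi_def
    proof (rule sum.cong[OF refl])
      fix t assume "t \<in> Pow J"
      show "(if t \<noteq> {} \<and> As \<inter> \<Inter>(B ` t) \<noteq> {} then (-1::int)^(card t - 1) else 0) =
        (if t \<noteq> {} \<and> \<Inter>((\<lambda>j. As \<inter> B j) ` t) \<noteq> {} then (-1::int)^(card t - 1) else 0)"
      proof (cases "t = {}")
        case False
        then have "\<Inter>((\<lambda>j. As \<inter> B j) ` t) = As \<inter> \<Inter>(B ` t)" by auto
        then show ?thesis by simp
      qed simp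
    qed
    ultimately have "(\<Sum>t\<in>Pow J. if t \<noteq> {} \<and> As \<inter> \<Inter>(B ` t) \<noteq> {} then (-1::int)^(card t - 1) else 0) = 1"
      by simp
    then have "(\<Sum>t\<in>Pow J. if s \<noteq> {} \<and> t \<noteq> {} \<and> As \<inter> \<Inter>(B ` t) \<noteq> {}
            then (-1::int)^(card s - 1) * (-1)^(card t - 1) else 0) = (-1::int)^(card s - 1)"
    proof -
      have "(\<Sum>t\<in>Pow J. if s \<noteq> {} \<and> t \<noteq> {} \<and> As \<inter> \<Inter>(B ` t) \<noteq> {}
            then (-1::int)^(card s - 1) * (-1)^(card t - 1) else 0) =
          (\<Sum>t\<in>Pow J. (-1::int)^(card s - 1) * (if t \<noteq> {} \<and> As \<inter> \<Inter>(B ` t) \<noteq> {} then (-1::int)^(card t - 1) else 0))"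
        by (rule sum.cong) (use True in auto)
      also have "\<dots> = (-1::int)^(card s - 1) * (\<Sum>t\<in>Pow J. if t \<noteq> {} \<and> As \<inter> \<Inter>(B ` t) \<noteq> {} then (-1::int)^(card t - 1) else 0)"
        by (rule sum_distrib_left[symmetric])
      finally show ?thesis using \<open>(\<Sum>t\<in>Pow J. if t \<noteq> {} \<and> As \<inter> \<Inter>(B ` t) \<noteq> {} then (-1::int)^(card t - 1) else 0) = 1\<close> by simp
    qed
    then show ?thesis using True unfolding As_def by simp
  qed
qed

lemma chi_same_union:
  fixes A :: "'i \<Rightarrow> 'a::euclidean_space set" and B :: "'j \<Rightarrow> 'a set"
  assumes finI: "finite I" and finJ: "finite J"
    and cA: "\<forall>i\<in>I. closed (A i) \<and> convex (A i)" and cB: "\<forall>j\<in>J. closed (B j) \<and> convex (B j)"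
    and eq: "\<Union>(A ` I) = \<Union>(B ` J)"
  shows "chi I A = chi J B"
proof -
  have "chi I A = (\<Sum>s\<in>Pow I. \<Sum>t\<in>Pow J. if s \<noteq> {} \<and> t \<noteq> {} \<and> \<Inter>(A ` s) \<inter> \<Inter>(B ` t) \<noteq> {}
            then (-1::int)^(card s - 1) * (-1)^(card t - 1) else 0)"
    using chi_double[OF finI finJ cA cB] eq by simp
  also have "\<dots> = (\<Sum>t\<in>Pow J. \<Sum>s\<in>Pow I. if t \<noteq> {} \<and> s \<noteq> {} \<and> \<Inter>(B ` t) \<inter> \<Inter>(A ` s) \<noteq> {}
            then (-1::int)^(card t - 1) * (-1)^(card s - 1) else 0)"
    by (subst sum.swap) (auto intro!: sum.cong simp: Int_commute mult.commute)
  also have "\<dots> = chi J B"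
    using chi_double[OF finJ finI cB cA] eq by simp
  finally show ?thesis .
qed

lemma dist_le_halfspace:
  fixes a b :: "'a::euclidean_space"
  shows "{x. dist x a \<le> dist x b} = {x. inner (2 *\<^sub>R (b - a)) x \<le> inner b b - inner a a}"
proof -
  have sq: "(dist x c)^2 = inner x x - 2 * inner c x + inner c c" for x c :: 'a
    using dot_norm_neg[of x c] by (simp add: dist_norm power2_norm_eq_inner inner_commute)
  have "dist x a \<le> dist x b \<longleftrightarrow> (dist x a)^2 \<le> (dist x b)^2" for x
    by (simp add: power2_le_iff_abs_le)
  moreover have "(dist x a)^2 \<le> (dist x b)^2 \<longleftrightarrow> inner (2 *\<^sub>R (b - a)) x \<le> inner b b - inner a a" for x
    unfolding sq inner_scaleR_left inner_diff_left by (smt (verit))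
  ultimately show ?thesis by auto
qed

lemma voronoi_closed_convex:
  "closed (voronoi_cell P M i) \<and> convex (voronoi_cell P M i)"
proof -
  have eq: "voronoi_cell P M i = (\<Inter>j\<in>{..<M}. {x. dist x (P i) \<le> dist x (P j)})"
    unfolding voronoi_cell_def by auto
  show ?thesis unfolding eq dist_le_halfspace
    by (intro conjI closed_INT convex_INT ballI closed_halfspace_le convex_halfspace_le)
qed

lemma voronoi_union:
  "(\<Union>i\<in>{..<M}. voronoi_cell P M i \<inter> cball (P i) r) = (\<Union>i\<in>{..<M}. cball (P i) r)"
proof
  show "(\<Union>i\<in>{..<M}. voronoi_cell P M i \<inter> cball (P i) r) \<subseteq> (\<Union>i\<in>{..<M}. cball (P i) r)" by auto
next
  show "(\<Union>i\<in>{..<M}. cball (P i) r) \<subseteq> (\<Union>i\<in>{..<M}. voronoi_cell P M i \<inter> cball (P i) r)"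
  proof
    fix y assume "y \<in> (\<Union>i\<in>{..<M}. cball (P i) r)"
    then obtain i where i: "i < M" "dist (P i) y \<le> r" by auto
    define m where "m = Min ((\<lambda>j. dist y (P j)) ` {..<M})"
    have "m \<in> (\<lambda>j. dist y (P j)) ` {..<M}" unfolding m_def using i(1) by (intro Min_in) auto
    then obtain k where k0: "k \<in> {..<M}" "m = dist y (P k)" by auto
    have "\<forall>j\<in>{..<M}. m \<le> dist y (P j)" unfolding m_def by auto
    then have k: "k \<in> {..<M}" "\<forall>j\<in>{..<M}. dist y (P k) \<le> dist y (P j)" using k0 by auto
    then show "y \<in> (\<Union>i\<in>{..<M}. voronoi_cell P M i \<inter> cball (P i) r)"
      using i unfolding voronoi_cell_def by (auto simp: dist_commute intro!: bexI[of _ k] order.trans[OF _ i(2)])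
  qed
qed

lemma ecc_chi: "ecc P M r = chi {..<M} (\<lambda>i. voronoi_cell P M i \<inter> cball (P i) r)"
proof -
  define U where "U i = voronoi_cell P M i \<inter> cball (P i) r" for i
  define K where "K = nerve {..<M} U"
  have K_eq: "K = {s\<in>Pow {..<M}. s \<noteq> {} \<and> \<Inter>(U ` s) \<noteq> {}}"
    unfolding K_def nerve_def by (auto intro: finite_subset)
  have finK: "finite K" unfolding K_eq by simp
  have cardK: "card s \<noteq> 0" "card s \<le> M" if "s \<in> K" for s
    using that unfolding K_eq by (auto simp: card_gt_0_iff intro: finite_subset dest: card_mono[OF finite_lessThan])
  have "chi {..<M} U = (\<Sum>s\<in>K. (-1::int)^(card s - 1))"
    unfolding K_eq chi_def by (subst sum.inter_filter) auto
  also have "\<dots> = (\<Sum>i\<in>{..<M}. \<Sum>s\<in>{s. s \<in> K \<and> card s - 1 = i}. (-1::int)^(card s - 1))"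
    by (rule sum.group[symmetric]) (use finK cardK in force)+
  also have "\<dots> = (\<Sum>i<M. (-1)^i * int (num_simplices K i))"
  proof (rule sum.cong[OF refl])
    fix i assume "i \<in> {..<M}"
    have "{s. s \<in> K \<and> card s - 1 = i} = {s\<in>K. card s = Suc i}" using cardK by force
    then show "(\<Sum>s\<in>{s. s \<in> K \<and> card s - 1 = i}. (-1::int)^(card s - 1)) = (-1)^i * int (num_simplices K i)"
      unfolding num_simplices_def by simp
  qed
  finally show ?thesis unfolding ecc_def euler_char_def alpha_complex_def K_def U_def by simp
qed

lemma ecc_cech: "ecc P M r = chi {..<M} (\<lambda>i. cball (P i) r)"
  unfolding ecc_chi
  by (rule chi_same_union) (auto simp: voronoi_union voronoi_closed_convex intro!: closed_Int convex_Int)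

lemma updiff:
  fixes A A' :: "real set"
  assumes up1: "\<forall>r r'. r \<in> A \<longrightarrow> r \<le> r' \<longrightarrow> r' \<in> A" and up2: "\<forall>r r'. r \<in> A' \<longrightarrow> r \<le> r' \<longrightarrow> r' \<in> A'"
    and sh1: "\<forall>r\<in>A. r + d \<in> A'" and sh2: "\<forall>r\<in>A'. r + d \<in> A" and nn: "\<forall>r\<in>A \<union> A'. 0 \<le> r" and d0: "0 \<le> d"
  shows "\<exists>a. \<forall>r. (r \<in> A \<longleftrightarrow> r \<in> A') \<or> (a \<le> r \<and> r \<le> a + d)"
proof (cases "A \<union> A' = {}")
  case True then show ?thesis by auto
next
  case False
  define a where "a = Inf (A \<union> A')"
  have bdd: "bdd_below (A \<union> A')" using nn unfolding bdd_below_def by blast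
  show ?thesis
  proof (intro exI allI)
    fix r
    show "(r \<in> A \<longleftrightarrow> r \<in> A') \<or> (a \<le> r \<and> r \<le> a + d)"
    proof (rule ccontr)
      assume H: "\<not> ((r \<in> A \<longleftrightarrow> r \<in> A') \<or> (a \<le> r \<and> r \<le> a + d))"
      then have rin: "r \<in> A \<union> A'" by auto
      have "a \<le> r" unfolding a_def using cInf_lower[OF rin bdd] .
      with H have "r > a + d" by auto
      then have "Inf (A \<union> A') < r - d" unfolding a_def by simp
      then obtain r0 where r0: "r0 \<in> A \<union> A'" "r0 < r - d" using cInf_less_iff[OF False bdd] by auto
      have "r \<in> A \<and> r \<in> A'"
      proof (cases "r0 \<in> A")
        case True
        then have "r0 + d \<in> A'" using sh1 by auto
        moreover have "r0 \<le> r" "r0 + d \<le> r" using r0 d0 True by auto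
        ultimately show ?thesis using up1 up2 True by blast
      next
        case False
        then have "r0 \<in> A'" using r0 by auto
        then have "r0 + d \<in> A" using sh2 by auto
        moreover have "r0 \<le> r" "r0 + d \<le> r" using r0 d0 by auto
        ultimately show ?thesis using up1 up2 \<open>r0 \<in> A'\<close> by blast
      qed
      with H show False by auto
    qed
  qed
qed

lemma chi_S:
  fixes U :: "nat \<Rightarrow> 'a set"
  shows "chi {..<M} U = (\<Sum>s\<in>Pow {..<M} - {{}}. if \<Inter>(U ` s) \<noteq> {} then (-1)^(card s - 1) else 0)"
  unfolding chi_def
  by (rule sum.mono_neutral_cong_right) auto

theorem mainTheorem1:
  fixes x :: "nat \<Rightarrow> real^3" and M :: nat and \<epsilon> :: real
  assumes distinct: "inj_on x {..<M}"
    and eps_pos: "0 < \<epsilon>"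
    and eps_small: "\<forall>i<M. \<forall>j<M. i \<noteq> j \<longrightarrow> 2 * \<epsilon> < dist (x i) (x j)"
  shows "\<exists>\<delta>>0. \<forall>x' :: nat \<Rightarrow> real^3. (\<forall>i<M. dist (x i) (x' i) \<le> \<delta>) \<longrightarrow>
           (\<integral>\<^sup>+ r. indicator {0..} r * ennreal \<bar>real_of_int (ecc x M r - ecc x' M r)\<bar> \<partial>lborel)
             \<le> ennreal (real M ^ 4 * \<epsilon> / 4)"
proof -
  define \<delta> where "\<delta> = \<epsilon> / (4 * 2^M)"
  have dpos: "\<delta> > 0" unfolding \<delta>_def using eps_pos by simp
  show ?thesis
  proof (intro exI[of _ \<delta>] conjI allI impI dpos)
    fix x' :: "nat \<Rightarrow> real^3"
    assume hx: "\<forall>i<M. dist (x i) (x' i) \<le> \<delta>"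
    define A where "A P s = {r::real. \<Inter>((\<lambda>i. cball (P i) r) ` s) \<noteq> {}}" for P :: "nat \<Rightarrow> real^3" and s
    define S where "S = Pow {..<M} - {{}}"
    have finS: "finite S" unfolding S_def by simp
    have up: "\<forall>r r'. r \<in> A P s \<longrightarrow> r \<le> r' \<longrightarrow> r' \<in> A P s" for P s
    proof (intro allI impI)
      fix r r' assume "r \<in> A P s" "r \<le> r'"
      moreover have "\<Inter>((\<lambda>i. cball (P i) r) ` s) \<subseteq> \<Inter>((\<lambda>i. cball (P i) r') ` s)"
        using \<open>r \<le> r'\<close> by auto
      ultimately show "r' \<in> A P s" unfolding A_def by blast
    qed
    have sh: "\<forall>r\<in>A P s. r + \<delta> \<in> A Q s" if dPQ: "\<forall>i\<in>s. dist (P i) (Q i) \<le> \<delta>" for P Q s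
    proof
      fix r assume "r \<in> A P s"
      then obtain y where y: "\<forall>i\<in>s. dist (P i) y \<le> r" unfolding A_def by auto
      have "\<forall>i\<in>s. dist (Q i) y \<le> r + \<delta>"
      proof
        fix i assume "i \<in> s"
        have "dist (Q i) y \<le> dist (P i) (Q i) + dist (P i) y" by (metis dist_commute dist_triangle)
        then show "dist (Q i) y \<le> r + \<delta>" using y dPQ \<open>i \<in> s\<close> by fastforce
      qed
      then have "y \<in> (\<Inter>i\<in>s. cball (Q i) (r + \<delta>))" by auto
      then show "r + \<delta> \<in> A Q s" unfolding A_def by blast
    qed
    have nn: "\<forall>r\<in>A P s. 0 \<le> r" if sne: "s \<noteq> {}" for P s
    proof
      fix r assume "r \<in> A P s"
      then obtain y where y: "\<forall>i\<in>s. dist (P i) y \<le> r" unfolding A_def by auto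
      obtain i where "i \<in> s" using sne by auto
      then have "dist (P i) y \<le> r" using y by blast
      then show "0 \<le> r" using zero_le_dist[of "P i" y] by linarith
    qed
    have "\<forall>s\<in>S. \<exists>a. \<forall>r. (r \<in> A x s \<longleftrightarrow> r \<in> A x' s) \<or> (a \<le> r \<and> r \<le> a + \<delta>)"
    proof
      fix s assume s: "s \<in> S"
      then have sM: "s \<subseteq> {..<M}" "s \<noteq> {}" unfolding S_def by auto
      have d1: "\<forall>i\<in>s. dist (x i) (x' i) \<le> \<delta>" using hx sM by auto
      have d2: "\<forall>i\<in>s. dist (x' i) (x i) \<le> \<delta>" using d1 by (simp add: dist_commute)
      show "\<exists>a. \<forall>r. (r \<in> A x s \<longleftrightarrow> r \<in> A x' s) \<or> (a \<le> r \<and> r \<le> a + \<delta>)"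
        by (rule updiff[OF up up sh[OF d1] sh[OF d2]]) (use nn[OF sM(2)] dpos in auto)
    qed
    then obtain a where a: "\<forall>s\<in>S. \<forall>r. (r \<in> A x s \<longleftrightarrow> r \<in> A x' s) \<or> (a s \<le> r \<and> r \<le> a s + \<delta>)"
      by metis
    define g where "g r = (\<Sum>s\<in>S. indicator {a s..a s + \<delta>} r :: real)" for r
    have eccS: "ecc P M r = (\<Sum>s\<in>S. if r \<in> A P s then (-1)^(card s - 1) else 0)" for P r
      unfolding ecc_cech chi_S S_def A_def by simp
    have pw: "indicator {0..} r * ennreal \<bar>real_of_int (ecc x M r - ecc x' M r)\<bar> \<le> ennreal (g r)" for r
    proof -
      have "real_of_int (ecc x M r - ecc x' M r) =
          (\<Sum>s\<in>S. real_of_int ((if r \<in> A x s then (-1)^(card s - 1) else 0) - (if r \<in> A x' s then (-1)^(card s - 1) else 0)))"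
        unfolding eccS by (simp add: sum_subtractf)
      also have "\<bar>\<dots>\<bar> \<le> (\<Sum>s\<in>S. \<bar>real_of_int ((if r \<in> A x s then (-1)^(card s - 1) else 0) - (if r \<in> A x' s then (-1)^(card s - 1) else 0))\<bar>)"
        by (rule sum_abs)
      also have "\<dots> \<le> g r" unfolding g_def
      proof (rule sum_mono)
        fix s assume s: "s \<in> S"
        show "\<bar>real_of_int ((if r \<in> A x s then (-1)^(card s - 1) else 0) - (if r \<in> A x' s then (-1)^(card s - 1) else 0))\<bar>
            \<le> indicator {a s..a s + \<delta>} r"
        proof (cases "r \<in> A x s \<longleftrightarrow> r \<in> A x' s")
          case True then show ?thesis by auto
        next
          case False
          then have "a s \<le> r \<and> r \<le> a s + \<delta>" using a s by blast
          then show ?thesis using False by auto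
        qed
      qed
      finally have le: "\<bar>real_of_int (ecc x M r - ecc x' M r)\<bar> \<le> g r" .
      show ?thesis
      proof (cases "0 \<le> r")
        case True then show ?thesis using le by (simp add: ennreal_leI)
      next
        case False then show ?thesis by simp
      qed
    qed
    have "(\<integral>\<^sup>+ r. indicator {0..} r * ennreal \<bar>real_of_int (ecc x M r - ecc x' M r)\<bar> \<partial>lborel)
        \<le> (\<integral>\<^sup>+ r. ennreal (g r) \<partial>lborel)"
      by (rule nn_integral_mono) (use pw in auto)
    also have "\<dots> = (\<integral>\<^sup>+ r. (\<Sum>s\<in>S. indicator {a s..a s + \<delta>} r) \<partial>lborel)"
    proof -
      have gi: "ennreal (g r) = (\<Sum>s\<in>S. indicator {a s..a s + \<delta>} r)" for r
      proof -
        have e: "(\<Sum>s\<in>S. ennreal (indicator {a s..a s + \<delta>} r)) = ennreal (g r)"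
          unfolding g_def by (rule sum_ennreal) simp
        show ?thesis unfolding e[symmetric] ennreal_indicator by (rule refl)
      qed
      show ?thesis by (rule nn_integral_cong) (rule gi)
    qed
    also have "\<dots> = (\<Sum>s\<in>S. \<integral>\<^sup>+ r. indicator {a s..a s + \<delta>} r \<partial>lborel)"
      by (rule nn_integral_sum) simp
    also have "\<dots> = (\<Sum>s\<in>S. ennreal \<delta>)"
      using dpos by simp
    also have "\<dots> = ennreal (real (card S) * \<delta>)" by (simp add: ennreal_mult' ennreal_of_nat_eq_real_of_nat)
    also have "\<dots> \<le> ennreal (real M ^ 4 * \<epsilon> / 4)"
    proof (rule ennreal_leI)
      have cS: "card S = 2^M - 1" unfolding S_def by (simp add: card_Diff_singleton card_Pow)
      show "real (card S) * \<delta> \<le> real M ^ 4 * \<epsilon> / 4"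
      proof (cases "M = 0")
        case True then show ?thesis using cS by simp
      next
        case False
        then have m1: "(1::real) \<le> real M ^ 4" by simp
        have "real (card S) \<le> 2^M" using cS by simp
        then have b1: "real (card S) * \<delta> \<le> 2^M * \<delta>" using dpos by (simp add: mult_right_mono)
        have b2: "2^M * \<delta> = \<epsilon> / 4" unfolding \<delta>_def by simp
        have c: "1 * (\<epsilon> / 4) \<le> real M ^ 4 * (\<epsilon> / 4)"
          by (rule mult_right_mono[OF m1]) (use eps_pos in simp)
        have "real M ^ 4 * (\<epsilon> / 4) = real M ^ 4 * \<epsilon> / 4" by simp
        then show ?thesis using b1 b2 c by linarith
      qed
    qed
    finally show "(\<integral>\<^sup>+ r. indicator {0..} r * ennreal \<bar>real_of_int (ecc x M r - ecc x' M r)\<bar> \<partial>lborel)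
        \<le> ennreal (real M ^ 4 * \<epsilon> / 4)" .
  qed
qed

end
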